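(* Let $A\in\mathbb{C}^{n\times n}$ be positive definite (i.e. $A+A^*$ is Hermitian positive definite), let $C\in\mathbb{C}^{m\times m}$ be positive semidefinite (i.e. $C+C^*$ is Hermitian positive semidefinite), let $B\in\mathbb{C}^{m\times n}$ with $m\le n$, and let $$\mathcal{A}=\begin{bmatrix}A&B^*\\-B&C\end{bmatrix}$$ be singular, with linear system $\mathcal{A}u=b$. Write $A=A_P+A_S$ with $A_P$ positive definite and $A_S$ skew-Hermitian, $C=C_P+C_S$ with $C_P$ positive semidefinite and $C_S$ skew-Hermitian, and $B=B_P+B_S$ an arbitrary splitting. Let $P_\alpha\in\mathbb{C}^{n\times n}$, $P_\beta\in\mathbb{C}^{m\times m}$ be Hermitian positive definite, set $$\mathcal{P}=\begin{bmatrix}A_P&B_P^*\\-B_P&C_P\end{bmatrix},\quad \mathcal{S}=\begin{bmatrix}A_S&B_S^*\\-B_S&C_S\end{bmatrix},\quad \Sigma=\begin{bmatrix}P_\alpha&0\\0&P_\beta\end{bmatrix},$$ and consider the EPSS iteration $u^{k+1}=\Gamma_{\mathrm{EPSS}}u^k+c$ with $\Gamma_{\mathrm{EPSS}}=(\Sigma+\mathcal{S})^{-1}(\Sigma-\mathcal{P})(\Sigma+\mathcal{P})^{-1}(\Sigma-\mathcal{S})$ and $c=2(\Sigma+\mathcal{S})^{-1}\Sigma(\Sigma+\mathcal{P})^{-1}b$. Suppose $\mathrm{null}(C+C^* )\subseteq\mathrm{null}(C)$ and that at least one of the following holds: (1) for all nonzero $r\in\mathrm{null}(C+C^* )$, $r^*(P_\beta+C_SP_\beta^{-1}C_S^*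 )r\neq r^*(B_SP_\alpha^{-1}B_P^* )r$; (2) every nonzero $r\in\mathrm{null}(C+C^* )$ satisfies $r^*(B_SP_\alpha^{-1}B_P^* )r\le 0$; (3) $\mathrm{null}(C+C^* )\subseteq\mathrm{null}(B_S^* )\cup\mathrm{null}(B_P^* )$; (4) $C$ is positive definite, or $B_S=0$, or $B_P=0$. Then the EPSS iteration is semi-convergent, i.e. it converges to a solution of $\mathcal{A}u=b$ for every initial guess $u^0$.
   Context: $\mathrm{null}(\cdot)$ denotes the null space. An iteration for a singular system is called semi-convergent if it converges to a solution of the system for any initial guess; the system $\mathcal{A}u=b$ is understood to be consistent (solvable). In condition (2), "$\le 0$" means the (complex) number is real and nonpositive. *)

theory Defs
  imports "HOL-Analysis.Analysis"
begin

definition cadj :: "complex^'n^'m \<Rightarrow> complex^'m^'n" where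
  "cadj M = (\<chi> i j. cnj (M $ j $ i))"

definition qform :: "complex^'n^'n \<Rightarrow> complex^'n \<Rightarrow> complex" where
  "qform M x = (\<Sum>i\<in>UNIV. cnj (x $ i) * (M *v x) $ i)"

definition hermitian :: "complex^'n^'n \<Rightarrow> bool" where
  "hermitian M \<longleftrightarrow> cadj M = M"

definition skew_hermitian :: "complex^'n^'n \<Rightarrow> bool" where
  "skew_hermitian M \<longleftrightarrow> cadj M = - M"

definition hpd :: "complex^'n^'n \<Rightarrow> bool" where
  "hpd M \<longleftrightarrow> hermitian M \<and> (\<forall>x. x \<noteq> 0 \<longrightarrow> Im (qform M x) = 0 \<and> Re (qform M x) > 0)"

definition hpsd :: "complex^'n^'n \<Rightarrow> bool" where
  "hpsd M \<longleftrightarrow> hermitian M \<and> (\<forall>x. Im (qform M x) = 0 \<and> Re (qform M x) \<ge> 0)"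

text \<open>Paper's (non-Hermitian) positive (semi)definiteness: M + M^* is HPD / HPSD.\<close>
definition pos_def :: "complex^'n^'n \<Rightarrow> bool" where
  "pos_def M \<longleftrightarrow> hpd (M + cadj M)"

definition pos_semidef :: "complex^'n^'n \<Rightarrow> bool" where
  "pos_semidef M \<longleftrightarrow> hpsd (M + cadj M)"

definition nullsp :: "complex^'n^'m \<Rightarrow> (complex^'n) set" where
  "nullsp M = {x. M *v x = 0}"

definition block :: "complex^'n^'n \<Rightarrow> complex^'m^'n \<Rightarrow> complex^'n^'m \<Rightarrow> complex^'m^'m
    \<Rightarrow> complex^('n + 'm)^('n + 'm)" where
  "block A B C D = (\<chi> i j. case i of
      Inl a \<Rightarrow> (case j of Inl b \<Rightarrow> A $ a $ b | Inr b \<Rightarrow> B $ a $ b)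
    | Inr a \<Rightarrow> (case j of Inl b \<Rightarrow> C $ a $ b | Inr b \<Rightarrow> D $ a $ b))"

definition semi_convergent :: "complex^'k^'k \<Rightarrow> complex^'k \<Rightarrow> complex^'k^'k \<Rightarrow> complex^'k \<Rightarrow> bool" where
  "semi_convergent G c M b \<longleftrightarrow>
     (\<forall>u0. \<exists>u. M *v u = b \<and> (\<lambda>k. ((\<lambda>v. G *v v + c) ^^ k) u0) \<longlonglongrightarrow> u)"

end

theory Submission
  imports Defs "HOL-Computational_Algebra.Fundamental_Theorem_Algebra"
begin

section \<open>Generic complex linear algebra\<close>

definition ip :: "complex^'n \<Rightarrow> complex^'n \<Rightarrow> complex" where
  "ip x y = (\<Sum>i\<in>UNIV. cnj (x $ i) * y $ i)"

lemma qform_ip: "qform M x = ip x (M *v x)"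
  by (simp add: qform_def ip_def)

lemma mv_smult: "(M::complex^'n^'m) *v (c *s x) = c *s (M *v x)"
  by (simp add: matrix_vector_mult_def vec_eq_iff sum_distrib_left mult_ac)

lemma mv_uminus: "(M::complex^'n^'m) *v (- x) = - (M *v x)"
  by (simp add: matrix_vector_mult_def vec_eq_iff sum_negf)

lemma mv_uminus_left: "(- M::complex^'n^'m) *v x = - (M *v x)"
  by (simp add: matrix_vector_mult_def vec_eq_iff sum_negf)

lemma ip_adj: "ip ((M::complex^'n^'m) *v x) y = ip x (cadj M *v y)"
proof -
  have "ip (M *v x) y = (\<Sum>i\<in>UNIV. \<Sum>j\<in>UNIV. cnj (M $ i $ j) * cnj (x $ j) * y $ i)"
    by (simp add: ip_def matrix_vector_mult_def cnj_sum sum_distrib_right sum_distrib_left mult_ac)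
  also have "\<dots> = (\<Sum>j\<in>UNIV. \<Sum>i\<in>UNIV. cnj (M $ i $ j) * cnj (x $ j) * y $ i)"
    by (rule sum.swap)
  also have "\<dots> = ip x (cadj M *v y)"
    by (simp add: ip_def matrix_vector_mult_def cadj_def sum_distrib_left mult_ac)
  finally show ?thesis .
qed

lemma ip_add_right: "ip x (y + z) = ip x y + ip x z"
  by (simp add: ip_def sum.distrib distrib_left)
lemma ip_add_left: "ip (x + y) z = ip x z + ip y z"
  by (simp add: ip_def sum.distrib distrib_right)
lemma ip_diff_right: "ip x (y - z) = ip x y - ip x z"
  by (simp add: ip_def sum_subtractf right_diff_distrib)
lemma ip_diff_left: "ip (x - y) z = ip x z - ip y z"
  by (simp add: ip_def sum_subtractf left_diff_distrib)
lemma ip_minus_right: "ip x (- y) = - ip x y"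
  by (simp add: ip_def sum_negf)
lemma ip_minus_left: "ip (- x) y = - ip x y"
  by (simp add: ip_def sum_negf)
lemma ip_smult_right: "ip x (c *s y) = c * ip x y"
  by (simp add: ip_def sum_distrib_left mult_ac)
lemma ip_smult_left: "ip (c *s x) y = cnj c * ip x y"
  by (simp add: ip_def sum_distrib_left mult_ac)
lemma ip_zero_right[simp]: "ip x 0 = 0"
  by (simp add: ip_def)
lemma ip_zero_left[simp]: "ip 0 x = 0"
  by (simp add: ip_def)
lemma ip_cnj: "cnj (ip x y) = ip y x"
  by (simp add: ip_def mult.commute)

lemmas ip_simps = ip_add_right ip_add_left ip_diff_right ip_diff_left ip_minus_right ip_minus_left
  ip_smult_right ip_smult_left

lemma cnj_mult_self: "cnj z * z = complex_of_real ((cmod z)\<^sup>2)"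
  by (metis complex_norm_square mult.commute)

lemma ip_self: "ip x x = of_real (\<Sum>i\<in>UNIV. (cmod (x $ i))\<^sup>2)"
  by (simp add: ip_def cnj_mult_self)

lemma ip_self_Im[simp]: "Im (ip x x) = 0"
  by (simp add: ip_self)

lemma ip_self_Re_nonneg: "Re (ip x x) \<ge> 0"
  by (simp add: ip_self sum_nonneg)

lemma ip_self_eq_0: "ip x x = 0 \<longleftrightarrow> x = 0"
proof
  assume "ip x x = 0"
  then have "(\<Sum>i\<in>UNIV. (cmod (x $ i))\<^sup>2) = 0" unfolding ip_self of_real_eq_0_iff .
  then have "\<forall>i\<in>UNIV. (cmod (x $ i))\<^sup>2 = 0"
    by (subst (asm) sum_nonneg_eq_0_iff) auto
  then show "x = 0" by (simp add: vec_eq_iff)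
qed simp

lemma ip_self_Re_pos: "x \<noteq> 0 \<Longrightarrow> Re (ip x x) > 0"
  using ip_self_Re_nonneg[of x] ip_self_eq_0[of x] ip_self_Im[of x]
  by (metis complex_eq_iff less_eq_real_def zero_complex.sel(1) zero_complex.sel(2))

lemma Re_ip_self_norm: "Re (ip x x) = (norm x)\<^sup>2"
  by (simp add: ip_self norm_vec_def L2_set_def sum_nonneg)

lemma cadj_cadj[simp]: "cadj (cadj M) = M"
  by (simp add: cadj_def vec_eq_iff)
lemma cadj_add: "cadj (M + N) = cadj M + cadj N"
  by (simp add: cadj_def vec_eq_iff)
lemma cadj_diff: "cadj (M - N) = cadj M - cadj N"
  by (simp add: cadj_def vec_eq_iff)
lemma cadj_uminus: "cadj (- M) = - cadj M"
  by (simp add: cadj_def vec_eq_iff)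
lemma cadj_zero[simp]: "cadj 0 = 0"
  by (simp add: cadj_def vec_eq_iff)
lemma cadj_mat1[simp]: "cadj (mat 1) = mat 1"
  by (simp add: cadj_def vec_eq_iff mat_def)
lemma cadj_mult: "cadj ((M::complex^'n^'m) ** (N::complex^'k^'n)) = cadj N ** cadj M"
  by (simp add: cadj_def vec_eq_iff matrix_matrix_mult_def mult.commute)

lemma herm_ip: "hermitian M \<Longrightarrow> ip (M *v x) y = ip x (M *v y)"
  by (simp add: hermitian_def ip_adj)

lemma herm_qform_real: "hermitian M \<Longrightarrow> cnj (qform M x) = qform M x"
  by (simp add: qform_ip ip_cnj herm_ip)

lemma Re_ip_K: "Re (ip x (K *v x)) = Re (ip x ((K + cadj K) *v x)) / 2"
proof -
  have "ip x (cadj K *v x) = cnj (ip x (K *v x))"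
    by (simp add: ip_adj[symmetric] ip_cnj)
  then show ?thesis by (simp add: matrix_vector_mult_add_rdistrib ip_add_right)
qed

lemma inv_from_ker:
  fixes M :: "complex^'n^'n"
  assumes "\<And>x. M *v x = 0 \<Longrightarrow> x = 0"
  shows "invertible M"
  using assms matrix_left_invertible_ker invertible_left_inverse by blast

lemma minv:
  fixes M :: "complex^'n^'n"
  assumes "invertible M"
  shows "M ** matrix_inv M = mat 1" "matrix_inv M ** M = mat 1"
proof -
  have "\<exists>A'. M ** A' = mat 1 \<and> A' ** M = mat 1" using assms by (simp add: invertible_def)
  then have "M ** matrix_inv M = mat 1 \<and> matrix_inv M ** M = mat 1"
    unfolding matrix_inv_def by (rule someI_ex)
  then show "M ** matrix_inv M = mat 1" "matrix_inv M ** M = mat 1" by auto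
qed

lemma minv_mv:
  fixes M :: "complex^'n^'n"
  assumes "invertible M"
  shows "M *v (matrix_inv M *v x) = x" "matrix_inv M *v (M *v x) = x"
  by (simp_all add: matrix_vector_mul_assoc minv[OF assms])

lemma hpd_inv: "hpd (M::complex^'n^'n) \<Longrightarrow> invertible M"
  apply (rule inv_from_ker)
  apply (auto simp: hpd_def qform_ip)
  done

lemma hpd_minv:
  fixes M :: "complex^'n^'n"
  assumes h: "hpd M"
  shows "hpd (matrix_inv M)"
proof -
  have inv: "invertible M" using hpd_inv[OF h] .
  have herm: "cadj M = M" using h by (simp add: hpd_def hermitian_def)
  have "cadj (matrix_inv M) ** M = mat 1"
    using cadj_mult[of M "matrix_inv M"] minv(1)[OF inv] herm by simp
  then have "cadj (matrix_inv M) = matrix_inv M"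
    by (metis matrix_mul_assoc matrix_mul_lid matrix_mul_rid minv(1)[OF inv])
  then have hm: "hermitian (matrix_inv M)" by (simp add: hermitian_def)
  have "\<forall>x. x \<noteq> 0 \<longrightarrow> Im (qform (matrix_inv M) x) = 0 \<and> Re (qform (matrix_inv M) x) > 0"
  proof (intro allI impI)
    fix x :: "complex^'n" assume x: "x \<noteq> 0"
    define w where "w = matrix_inv M *v x"
    have xw: "x = M *v w" by (simp add: w_def minv_mv[OF inv])
    have "w \<noteq> 0" using x xw by auto
    have "qform (matrix_inv M) x = ip (M *v w) w"
      by (simp add: qform_ip xw minv_mv[OF inv])
    also have "\<dots> = qform M w"
      by (simp add: qform_ip herm_ip h[unfolded hpd_def, THEN conjunct1])
    finally have "qform (matrix_inv M) x = qform M w" .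
    then show "Im (qform (matrix_inv M) x) = 0 \<and> Re (qform (matrix_inv M) x) > 0"
      using h \<open>w \<noteq> 0\<close> by (simp add: hpd_def)
  qed
  then show ?thesis using hm by (simp add: hpd_def)
qed

lemma hpsd_null:
  fixes M :: "complex^'n^'n"
  assumes h: "hpsd M" and q: "Re (qform M x) = 0"
  shows "M *v x = 0"
proof (rule ccontr)
  assume ne: "M *v x \<noteq> 0"
  define y where "y = M *v x"
  define s where "s = Re (ip y y)"
  define q2 where "q2 = Re (qform M y)"
  have s_pos: "s > 0" using ip_self_Re_pos ne by (simp add: s_def y_def)
  have q2_nn: "q2 \<ge> 0" using h by (simp add: hpsd_def q2_def)
  have herm: "hermitian M" using h by (simp add: hpsd_def)
  define t where "t = s / (q2 + 1)"
  have t_pos: "t > 0" using s_pos q2_nn by (simp add: t_def)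
  define v where "v = x - complex_of_real t *s y"
  have "qform M v = qform M x - of_real t * ip x (M *v y) - of_real t * ip y y
      + of_real t * of_real t * qform M y"
    by (simp add: v_def qform_ip ip_simps matrix_vector_mult_diff_distrib mv_smult y_def
        algebra_simps)
  moreover have "ip x (M *v y) = ip y y"
    using herm_ip[OF herm, of x y] by (simp add: y_def)
  ultimately have "Re (qform M v) = Re (qform M x) - 2 * t * s + t * t * q2"
    by (simp add: s_def q2_def)
  then have "Re (qform M v) = t * (t * q2 - 2 * s)" using q by (simp add: algebra_simps)
  moreover have "t * q2 < s"
  proof -
    have "t * q2 = s * (q2 / (q2 + 1))" by (simp add: t_def)
    also have "\<dots> < s * 1" using s_pos q2_nn by (intro mult_strict_left_mono) auto
    finally show ?thesis by simp
  qed
  ultimately have "Re (qform M v) < 0" using t_pos s_pos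
    by (simp add: mult_pos_neg)
  then show False using h by (simp add: hpsd_def not_le[symmetric])
qed


section \<open>Blocks\<close>

definition tp :: "complex^('n::finite+'m::finite) \<Rightarrow> complex^'n" where "tp x = (\<chi> a. x $ Inl a)"
definition bt :: "complex^('n::finite+'m::finite) \<Rightarrow> complex^'m" where "bt x = (\<chi> a. x $ Inr a)"

lemma sum_UNIV_plus: "(\<Sum>i\<in>(UNIV::('n::finite+'m::finite) set). f i) = (\<Sum>a\<in>UNIV. f (Inl a)) + (\<Sum>b\<in>UNIV. f (Inr b))"
  using sum.Plus[of "UNIV::'n set" "UNIV::'m set" f] by (simp add: comp_def UNIV_Plus_UNIV)

lemma top_block: "tp (block A B C D *v x) = A *v tp x + B *v bt x"
  by (simp add: tp_def bt_def block_def matrix_vector_mult_def vec_eq_iff sum_UNIV_plus)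
lemma bot_block: "bt (block A B C D *v x) = C *v tp x + D *v bt x"
  by (simp add: tp_def bt_def block_def matrix_vector_mult_def vec_eq_iff sum_UNIV_plus)

lemma vec_split_eq: "x = y \<longleftrightarrow> tp x = tp y \<and> bt x = bt y"
  apply (auto simp: tp_def bt_def vec_eq_iff)
  by (metis sumE)

lemma ip_split: "ip x y = ip (tp x) (tp y) + ip (bt x) (bt y)"
  by (simp add: ip_def tp_def bt_def sum_UNIV_plus)

lemma top_add[simp]: "tp (x + y) = tp x + tp y" by (simp add: tp_def vec_eq_iff)
lemma top_diff[simp]: "tp (x - y) = tp x - tp y" by (simp add: tp_def vec_eq_iff)
lemma top_uminus[simp]: "tp (- x) = - tp x" by (simp add: tp_def vec_eq_iff)
lemma top_smult[simp]: "tp (c *s x) = c *s tp x" by (simp add: tp_def vec_eq_iff)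
lemma top_zero[simp]: "tp 0 = 0" by (simp add: tp_def vec_eq_iff)
lemma bot_add[simp]: "bt (x + y) = bt x + bt y" by (simp add: bt_def vec_eq_iff)
lemma bot_diff[simp]: "bt (x - y) = bt x - bt y" by (simp add: bt_def vec_eq_iff)
lemma bot_uminus[simp]: "bt (- x) = - bt x" by (simp add: bt_def vec_eq_iff)
lemma bot_smult[simp]: "bt (c *s x) = c *s bt x" by (simp add: bt_def vec_eq_iff)
lemma bot_zero[simp]: "bt 0 = 0" by (simp add: bt_def vec_eq_iff)

lemma block_add: "block A B C D + block A' B' C' D' = block (A+A') (B+B') (C+C') (D+D')"
  by (simp add: block_def vec_eq_iff split: sum.split)
lemma block_diff: "block A B C D - block A' B' C' D' = block (A-A') (B-B') (C-C') (D-D')"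
  by (simp add: block_def vec_eq_iff split: sum.split)
lemma block_uminus: "- block A B C D = block (-A) (-B) (-C) (-D)"
  by (simp add: block_def vec_eq_iff split: sum.split)
lemma cadj_block: "cadj (block A B C D) = block (cadj A) (cadj C) (cadj B) (cadj D)"
  by (simp add: block_def cadj_def vec_eq_iff split: sum.split)

lemma qform_diag: "qform (block A 0 0 D) x = qform A (tp x) + qform D (bt x)"
  by (simp add: qform_ip ip_split[of x] top_block bot_block)


section \<open>Eigenvectors in invariant subspaces\<close>

definition mpow :: "complex^'k^'k \<Rightarrow> nat \<Rightarrow> complex^'k \<Rightarrow> complex^'k" where
  "mpow M j v = ((\<lambda>w. M *v w) ^^ j) v"

definition papp :: "complex poly \<Rightarrow> complex^'k^'k \<Rightarrow> complex^'k \<Rightarrow> complex^'k" where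
  "papp p M v = (\<Sum>j\<le>degree p. coeff p j *s mpow M j v)"

definition csub :: "(complex^'k) set \<Rightarrow> bool" where
  "csub U \<longleftrightarrow> 0 \<in> U \<and> (\<forall>x\<in>U. \<forall>y\<in>U. x + y \<in> U) \<and> (\<forall>c. \<forall>x\<in>U. c *s x \<in> U)"

lemma mpow_0[simp]: "mpow M 0 v = v" by (simp add: mpow_def)
lemma mpow_Suc: "mpow M (Suc j) v = M *v mpow M j v" by (simp add: mpow_def)

lemma smult_sum: "c *s (\<Sum>j\<in>A. f j) = (\<Sum>j\<in>A. c *s f j)" for f :: "'a \<Rightarrow> complex^'k"
  by (simp add: vec_eq_iff sum_distrib_left)

lemma mv_sum: "(M::complex^'k^'l) *v (\<Sum>j\<in>A. f j) = (\<Sum>j\<in>A. M *v f j)"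
  by (induction A rule: infinite_finite_induct) (auto simp: matrix_vector_right_distrib)

lemma smult_of_real: "complex_of_real r *s x = r *\<^sub>R x"
  unfolding vec_eq_iff by (auto simp: scaleR_conv_of_real[where 'a=complex])

lemma papp_le: "degree p \<le> N \<Longrightarrow> papp p M v = (\<Sum>j\<le>N. coeff p j *s mpow M j v)"
  unfolding papp_def by (rule sum.mono_neutral_left) (auto simp: coeff_eq_0)

lemma papp_add: "papp (p + q) M v = papp p M v + papp q M v"
proof -
  let ?N = "max (degree p) (degree q)"
  have "degree (p + q) \<le> ?N" by (rule degree_add_le) auto
  then show ?thesis
    by (simp add: papp_le[of _ ?N] vector_sadd_rdistrib sum.distrib)
qed

lemma papp_smult: "papp (smult c p) M v = c *s papp p M v"
proof -
  have "degree (smult c p) \<le> degree p" by simp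
  then show ?thesis
    by (simp add: papp_le[of _ "degree p"] smult_sum vector_smult_assoc)
qed

lemma papp_pCons0: "papp (pCons 0 p) M v = M *v papp p M v"
proof -
  have "degree (pCons 0 p) \<le> Suc (degree p)" by (simp add: degree_pCons_le)
  then have "papp (pCons 0 p) M v = (\<Sum>j\<le>Suc (degree p). coeff (pCons 0 p) j *s mpow M j v)"
    by (rule papp_le)
  also have "\<dots> = (\<Sum>j\<le>degree p. coeff p j *s mpow M (Suc j) v)"
    by (subst sum.atMost_Suc_shift) simp
  also have "\<dots> = M *v papp p M v"
    by (simp add: papp_def mv_sum mv_smult mpow_Suc)
  finally show ?thesis .
qed

lemma papp_lin: "papp ([:-a, 1:] * q) M v = M *v papp q M v - a *s papp q M v"
proof -
  have e: "[:-a, 1:] * q = pCons 0 q + smult (-a) q" by simp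
  show ?thesis unfolding e
    by (simp only: papp_add papp_smult papp_pCons0) (simp add: vector_smult_lneg)
qed

lemma csub_sum:
  assumes "csub U" "\<And>j. j \<in> A \<Longrightarrow> f j \<in> U"
  shows "(\<Sum>j\<in>A. f j) \<in> U"
  using assms(2)
proof (induction A rule: infinite_finite_induct)
  case (infinite A) then show ?case using assms(1) by (simp add: csub_def)
next
  case empty then show ?case using assms(1) by (simp add: csub_def)
next
  case (insert x F) then show ?case using assms(1) by (simp add: csub_def)
qed

lemma mpow_in: "csub U \<Longrightarrow> (\<forall>x\<in>U. M *v x \<in> U) \<Longrightarrow> v \<in> U \<Longrightarrow> mpow M j v \<in> U"
  by (induction j) (auto simp: mpow_Suc)

lemma papp_in:
  assumes "csub U" "\<forall>x\<in>U. M *v x \<in> U" "v \<in> U"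
  shows "papp p M v \<in> U"
  unfolding papp_def
proof (rule csub_sum[OF assms(1)])
  fix j
  have "mpow M j v \<in> U" using mpow_in[OF assms] .
  then show "coeff p j *s mpow M j v \<in> U" using assms(1) by (simp add: csub_def)
qed

lemma eig_poly:
  assumes U: "csub U" "\<forall>x\<in>U. M *v x \<in> U" and v: "v \<in> U" "v \<noteq> 0"
  shows "p \<noteq> 0 \<Longrightarrow> papp p M v = 0 \<Longrightarrow> \<exists>x\<in>U. x \<noteq> 0 \<and> (\<exists>l. M *v x = l *s x)"
proof (induction "degree p" arbitrary: p rule: less_induct)
  case less
  show ?case
  proof (cases "degree p = 0")
    case True
    then have "papp p M v = coeff p 0 *s v" by (simp add: papp_def)
    moreover have "coeff p 0 \<noteq> 0" using True less.prems(1)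
      by (metis leading_coeff_0_iff)
    ultimately show ?thesis using less.prems(2) v(2) by simp
  next
    case False
    then have "\<not> constant (poly p)" by (simp add: constant_degree)
    then obtain a where "poly p a = 0" using fundamental_theorem_of_algebra by blast
    then have "[:-a, 1:] dvd p" by (simp add: poly_eq_0_iff_dvd)
    then obtain q where pq: "p = [:-a, 1:] * q" by (elim dvdE)
    have q0: "q \<noteq> 0" using pq less.prems(1) by auto
    have "degree p = degree [:-a, 1:] + degree q" unfolding pq by (rule degree_mult_eq) (use q0 in auto)
    then have dq: "degree q < degree p" by simp
    define w where "w = papp q M v"
    show ?thesis
    proof (cases "w = 0")
      case True
      then show ?thesis using less.hyps[OF dq q0] by (simp add: w_def)
    next
      case False
      have "M *v w - a *s w = 0" using less.prems(2) unfolding pq papp_lin w_def .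
      then have "M *v w = a *s w" by simp
      moreover have "w \<in> U" unfolding w_def using papp_in[OF U v(1)] .
      ultimately show ?thesis using False by blast
    qed
  qed
qed

lemma exists_annih: "\<exists>p. p \<noteq> 0 \<and> papp p (M::complex^'k^'k) v = 0"
proof -
  define D where "D = DIM(complex^'k)"
  define f where "f j = mpow M j v" for j
  show ?thesis
  proof (cases "inj_on f {..D}")
    case False
    then obtain i j where ij: "i \<le> D" "j \<le> D" "i < j" "f i = f j"
      unfolding inj_on_def by (metis atMost_iff linorder_neqE_nat)
    define p :: "complex poly" where "p = monom 1 j - monom 1 i"
    have "coeff p j = 1" using ij by (simp add: p_def coeff_monom)
    then have "p \<noteq> 0" by auto
    have "degree p \<le> D" unfolding p_def
      using ij by (intro degree_diff_le) (auto simp: degree_monom_le intro: order.trans[OF degree_monom_le])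
    then have "papp p M v = (\<Sum>k\<le>D. coeff p k *s f k)" by (simp add: papp_le f_def)
    also have "\<dots> = (\<Sum>k\<le>D. (if k = j then f k else 0) - (if k = i then f k else 0))"
      by (intro sum.cong) (auto simp: p_def coeff_monom vector_sub_rdistrib)
    also have "\<dots> = f j - f i" using ij by (simp add: sum_subtractf)
    also have "\<dots> = 0" using ij by simp
    finally show ?thesis using \<open>p \<noteq> 0\<close> by blast
  next
    case True
    define S where "S = f ` {..D}"
    have fin: "finite S" by (simp add: S_def)
    have "card S = Suc D" using True by (simp add: S_def card_image)
    then have "dependent S" by (intro dependent_biggerset) (simp add: D_def)
    then obtain u where u: "\<exists>x\<in>S. u x \<noteq> 0" "(\<Sum>x\<in>S. u x *\<^sub>R x) = 0"
      using dependent_finite[OF fin] by blast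
    define p where "p = Poly (map (\<lambda>j. complex_of_real (u (f j))) [0..<Suc D])"
    have cp: "coeff p j = (if j \<le> D then complex_of_real (u (f j)) else 0)" for j
      by (simp add: p_def nth_default_def del: upt_Suc)
    have dp: "degree p \<le> D" by (rule degree_le) (simp add: cp)
    obtain x where x: "x \<in> S" "u x \<noteq> 0" using u(1) by blast
    then obtain j0 where "j0 \<le> D" "x = f j0" by (auto simp: S_def)
    then have "coeff p j0 \<noteq> 0" using x by (simp add: cp)
    then have "p \<noteq> 0" by auto
    have "papp p M v = (\<Sum>j\<le>D. coeff p j *s f j)" using dp by (simp add: papp_le f_def)
    also have "\<dots> = (\<Sum>j\<le>D. u (f j) *\<^sub>R f j)" by (intro sum.cong) (auto simp: cp smult_of_real)
    also have "\<dots> = (\<Sum>x\<in>S. u x *\<^sub>R x)" unfolding S_def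
      by (subst sum.reindex[OF True]) simp
    also have "\<dots> = 0" by (rule u(2))
    finally show ?thesis using \<open>p \<noteq> 0\<close> by blast
  qed
qed

lemma eig_exists:
  assumes "csub U" "\<forall>x\<in>U. (M::complex^'k^'k) *v x \<in> U" "v \<in> U" "v \<noteq> 0"
  shows "\<exists>x\<in>U. x \<noteq> 0 \<and> (\<exists>l. M *v x = l *s x)"
  using exists_annih[of M v] eig_poly[OF assms] by blast


lemma inv_pos:
  fixes Sg K :: "complex^'k^'k"
  assumes "hpd Sg" "\<And>x. Re (ip x ((K + cadj K) *v x)) \<ge> 0"
  shows "invertible (Sg + K)"
proof (rule inv_from_ker)
  fix x assume x0: "(Sg + K) *v x = 0"
  then have "Re (ip x ((Sg + K) *v x)) = 0" by simp
  then have "Re (ip x (Sg *v x) + ip x (K *v x)) = 0"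
    by (simp add: matrix_vector_mult_add_rdistrib ip_add_right)
  then have "Re (qform Sg x) + Re (ip x (K *v x)) = 0"
    by (simp add: qform_ip)
  moreover have "Re (ip x (K *v x)) \<ge> 0" using assms(2)[of x] Re_ip_K[of x K] by linarith
  ultimately have "Re (qform Sg x) \<le> 0" by linarith
  then show "x = 0" using assms(1) unfolding hpd_def by (meson not_le)
qed

lemma qform_zero[simp]: "qform M 0 = 0" by (simp add: qform_ip)

locale epss =
  fixes AP AS Pa :: "complex^'n::finite^'n"
    and C CP CS Pb :: "complex^'m::finite^'m"
    and BP BS :: "complex^'n^'m"
  assumes AP_pd: "pos_def AP" and AS_skew: "skew_hermitian AS"
    and C_split: "C = CP + CS" and C_psd: "pos_semidef C" and CS_skew: "skew_hermitian CS"
    and Pa_hpd: "hpd Pa" and Pb_hpd: "hpd Pb"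
    and null_incl: "nullsp (C + cadj C) \<subseteq> nullsp C"
    and conds:
      "(\<forall>r\<in>nullsp (C + cadj C). r \<noteq> 0 \<longrightarrow>
          qform (Pb + CS ** matrix_inv Pb ** cadj CS) r \<noteq> qform (BS ** matrix_inv Pa ** cadj BP) r)
     \<or> (\<forall>r\<in>nullsp (C + cadj C). r \<noteq> 0 \<longrightarrow>
          Im (qform (BS ** matrix_inv Pa ** cadj BP) r) = 0 \<and> Re (qform (BS ** matrix_inv Pa ** cadj BP) r) \<le> 0)
     \<or> nullsp (C + cadj C) \<subseteq> nullsp (cadj BS) \<union> nullsp (cadj BP)
     \<or> (pos_def C \<or> BS = 0 \<or> BP = 0)"
begin

definition "Pm = block AP (cadj BP) (- BP) CP"
definition "Sm = block AS (cadj BS) (- BS) CS"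
definition "Sg = block Pa 0 0 Pb"
definition "Gm = matrix_inv (Sg + Sm) ** (Sg - Pm) ** matrix_inv (Sg + Pm) ** (Sg - Sm)"
definition "Sgi = matrix_inv Sg"
definition "zf v = matrix_inv (Sg + Pm) *v ((Sg - Sm) *v v)"
definition "Gq x = ip x (Sgi *v x)"
definition "Nrm v = Re (Gq ((Sg + Sm) *v v))"
definition "lc v \<longleftrightarrow> tp (zf v) = 0 \<and> (C + cadj C) *v bt (zf v) = 0"

lemma Sg_hpd: "hpd Sg"
proof -
  have "cadj Pa = Pa" "cadj Pb = Pb" using Pa_hpd Pb_hpd by (simp_all only: hpd_def hermitian_def)
  then have h: "hermitian Sg"
    by (simp add: Sg_def hermitian_def cadj_block)
  have "\<forall>x. x \<noteq> 0 \<longrightarrow> Im (qform Sg x) = 0 \<and> Re (qform Sg x) > 0"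
  proof (intro allI impI)
    fix x :: "complex^('n+'m)" assume "x \<noteq> 0"
    then have d: "tp x \<noteq> 0 \<or> bt x \<noteq> 0" using vec_split_eq[of x 0] by auto
    have i1: "Im (qform Pa (tp x)) = 0"
      using Pa_hpd by (cases "tp x = 0") (auto simp: hpd_def)
    have i2: "Im (qform Pb (bt x)) = 0"
      using Pb_hpd by (cases "bt x = 0") (auto simp: hpd_def)
    have r1: "Re (qform Pa (tp x)) \<ge> 0"
      using Pa_hpd by (cases "tp x = 0") (auto simp: hpd_def less_imp_le)
    have r2: "Re (qform Pb (bt x)) \<ge> 0"
      using Pb_hpd by (cases "bt x = 0") (auto simp: hpd_def less_imp_le)
    have "Re (qform Pa (tp x)) > 0 \<or> Re (qform Pb (bt x)) > 0"
      using d Pa_hpd Pb_hpd by (auto simp: hpd_def)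
    then have "Re (qform Pa (tp x)) + Re (qform Pb (bt x)) > 0" using r1 r2 by linarith
    moreover have q: "qform Sg x = qform Pa (tp x) + qform Pb (bt x)" by (simp add: Sg_def qform_diag)
    ultimately show "Im (qform Sg x) = 0 \<and> Re (qform Sg x) > 0"
      using i1 i2 by simp
  qed
  then show ?thesis using h by (simp add: hpd_def)
qed

lemma Sg_inv: "invertible Sg" using hpd_inv[OF Sg_hpd] .
lemma Sgi_hpd: "hpd Sgi" unfolding Sgi_def using hpd_minv[OF Sg_hpd] .
lemma Sg_herm: "hermitian Sg" using Sg_hpd by (simp add: hpd_def)
lemma Sgi_herm: "hermitian Sgi" using Sgi_hpd by (simp add: hpd_def)

lemma Sm_skew: "cadj Sm = - Sm"
  using AS_skew CS_skew
  by (simp add: Sm_def cadj_block block_uminus skew_hermitian_def cadj_uminus)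

lemma Pm_sym: "Pm + cadj Pm = block (AP + cadj AP) 0 0 (C + cadj C)"
proof -
  have "cadj CS = - CS" using CS_skew by (simp add: skew_hermitian_def)
  then have "CP + cadj CP = C + cadj C" by (simp add: C_split cadj_add)
  then show ?thesis by (simp add: Pm_def cadj_block block_add cadj_uminus)
qed

lemma ip_Pm: "ip z ((Pm + cadj Pm) *v z) = qform (AP + cadj AP) (tp z) + qform (C + cadj C) (bt z)"
  unfolding Pm_sym using qform_diag[of "AP + cadj AP" "C + cadj C" z] by (simp add: qform_ip)

lemma Pm_nonneg: "Re (qform (AP + cadj AP) x) \<ge> 0" "Re (qform (C + cadj C) y) \<ge> 0"
proof -
  show "Re (qform (AP + cadj AP) x) \<ge> 0"
    using AP_pd by (cases "x = 0") (auto simp: pos_def_def hpd_def less_imp_le)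
  show "Re (qform (C + cadj C) y) \<ge> 0"
    using C_psd by (auto simp: pos_semidef_def hpsd_def)
qed

lemma Pm_ip_nonneg: "Re (ip z ((Pm + cadj Pm) *v z)) \<ge> 0"
  unfolding ip_Pm using Pm_nonneg(1)[of "tp z"] Pm_nonneg(2)[of "bt z"] by simp

lemma inv_SP: "invertible (Sg + Pm)"
  by (rule inv_pos[OF Sg_hpd Pm_ip_nonneg])

lemma inv_SS: "invertible (Sg + Sm)"
  by (rule inv_pos[OF Sg_hpd]) (simp add: Sm_skew)

lemma inv_SmS: "invertible (Sg - Sm)"
proof -
  have "invertible (Sg + (- Sm))"
    by (rule inv_pos[OF Sg_hpd]) (simp add: Sm_skew cadj_uminus)
  then show ?thesis by simp
qed

lemma Gm_apply: "Gm *v v = matrix_inv (Sg + Sm) *v ((Sg - Pm) *v zf v)"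
  by (simp add: Gm_def zf_def matrix_vector_mul_assoc[symmetric])

lemma E1: "(Sg + Pm) *v zf v = (Sg - Sm) *v v"
  by (simp add: zf_def minv_mv[OF inv_SP])

lemma E2: "(Sg + Sm) *v (Gm *v v) = (Sg - Pm) *v zf v"
  by (simp add: Gm_apply minv_mv[OF inv_SS])

lemma Gq_exp:
  "Gq (Sg *v w + K *v w) = ip w (Sg *v w) + ip w ((K + cadj K) *v w) + Gq (K *v w)"
  "Gq (Sg *v w - K *v w) = ip w (Sg *v w) - ip w ((K + cadj K) *v w) + Gq (K *v w)"
proof -
  have a: "Sgi *v (Sg *v x) = x" for x
    using minv_mv(2)[OF Sg_inv] by (simp add: Sgi_def)
  have b: "ip (Sg *v w) (Sgi *v y) = ip w y" for y
    using herm_ip[OF Sg_herm, of w "Sgi *v y"] minv_mv(1)[OF Sg_inv, of y] by (simp add: Sgi_def)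
  have c: "ip (Sg *v w) w = ip w (Sg *v w)" using herm_ip[OF Sg_herm] .
  have d: "ip (K *v w) w = ip w (cadj K *v w)" by (rule ip_adj)
  show "Gq (Sg *v w + K *v w) = ip w (Sg *v w) + ip w ((K + cadj K) *v w) + Gq (K *v w)"
    by (simp add: Gq_def matrix_vector_right_distrib ip_simps a b c d matrix_vector_mult_add_rdistrib)
  show "Gq (Sg *v w - K *v w) = ip w (Sg *v w) - ip w ((K + cadj K) *v w) + Gq (K *v w)"
    by (simp add: Gq_def matrix_vector_mult_diff_distrib ip_simps a b c d matrix_vector_mult_add_rdistrib)
qed

lemma Nrm_Gm: "Nrm (Gm *v v) = Nrm v - 2 * Re (ip (zf v) ((Pm + cadj Pm) *v zf v))"
proof -
  let ?z = "zf v"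
  have "Gq ((Sg + Sm) *v (Gm *v v)) = Gq (Sg *v ?z - Pm *v ?z)"
    by (simp add: E2 matrix_vector_mult_diff_rdistrib)
  also have "\<dots> = Gq (Sg *v ?z + Pm *v ?z) - 2 * ip ?z ((Pm + cadj Pm) *v ?z)"
    by (simp add: Gq_exp)
  also have "Gq (Sg *v ?z + Pm *v ?z) = Gq (Sg *v v - Sm *v v)"
    using E1[of v] by (simp add: matrix_vector_mult_add_rdistrib matrix_vector_mult_diff_rdistrib)
  also have "\<dots> = Gq (Sg *v v + Sm *v v)"
    by (simp add: Gq_exp Sm_skew)
  finally show ?thesis
    by (simp add: Nrm_def matrix_vector_mult_add_rdistrib)
qed

lemma Nrm_le: "Nrm (Gm *v v) \<le> Nrm v"
  using Nrm_Gm[of v] Pm_ip_nonneg[of "zf v"] by simp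

lemma Nrm_eq_iff: "Nrm (Gm *v v) = Nrm v \<longleftrightarrow> lc v"
proof
  let ?z = "zf v"
  assume "Nrm (Gm *v v) = Nrm v"
  then have "Re (ip ?z ((Pm + cadj Pm) *v ?z)) = 0" using Nrm_Gm[of v] by simp
  then have s: "Re (qform (AP + cadj AP) (tp ?z)) + Re (qform (C + cadj C) (bt ?z)) = 0"
    unfolding ip_Pm by simp
  have 1: "Re (qform (AP + cadj AP) (tp ?z)) = 0" "Re (qform (C + cadj C) (bt ?z)) = 0"
    using s Pm_nonneg(1)[of "tp ?z"] Pm_nonneg(2)[of "bt ?z"] by linarith+
  have "tp ?z = 0"
    using 1(1) AP_pd unfolding pos_def_def hpd_def by (metis less_irrefl)
  moreover have "(C + cadj C) *v bt ?z = 0"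
    using hpsd_null[OF C_psd[unfolded pos_semidef_def] 1(2)] .
  ultimately show "lc v" by (simp add: lc_def)
next
  assume "lc v"
  then have "ip (zf v) ((Pm + cadj Pm) *v zf v) = 0"
    unfolding ip_Pm by (simp add: lc_def qform_ip)
  then show "Nrm (Gm *v v) = Nrm v" using Nrm_Gm[of v] by simp
qed

lemma Gq_pos: "x \<noteq> 0 \<Longrightarrow> Re (Gq x) > 0"
  using Sgi_hpd by (simp add: Gq_def hpd_def qform_ip)

lemma Gq_zero[simp]: "Gq 0 = 0" by (simp add: Gq_def)

lemma Nrm_pos: "v \<noteq> 0 \<Longrightarrow> Nrm v > 0"
proof -
  assume "v \<noteq> 0"
  then have "(Sg + Sm) *v v \<noteq> 0" using inj_matrix_vector_mult[OF inv_SS]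
    by (metis injD matrix_vector_mult_0_right)
  then show ?thesis by (simp add: Nrm_def Gq_pos)
qed

lemma Nrm_zero[simp]: "Nrm 0 = 0" by (simp add: Nrm_def)

lemma Nrm_nonneg: "Nrm v \<ge> 0"
  using Nrm_pos[of v] by (cases "v = 0") auto

lemma Nrm_smult: "Nrm (c *s v) = (cmod c)\<^sup>2 * Nrm v"
proof -
  have "Gq (c *s x) = (cnj c * c) * Gq x" for x
    by (simp add: Gq_def mv_smult ip_simps)
  then show ?thesis
    by (simp add: Nrm_def mv_smult cnj_mult_self)
qed

lemma zf_add: "zf (v + w) = zf v + zf w"
  by (simp add: zf_def matrix_vector_right_distrib)
lemma zf_smult: "zf (c *s v) = c *s zf v"
  by (simp add: zf_def mv_smult)
lemma zf_zero[simp]: "zf 0 = 0"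
  by (simp add: zf_def)

lemma lc_zero: "lc 0" by (simp add: lc_def)
lemma lc_add: "lc v \<Longrightarrow> lc w \<Longrightarrow> lc (v + w)"
  by (simp add: lc_def zf_add matrix_vector_right_distrib)
lemma lc_smult: "lc v \<Longrightarrow> lc (c *s v)"
  by (simp add: lc_def zf_smult mv_smult)

end


context epss
begin

lemma eig_one:
  assumes ev: "Gm *v v = l *s v" and v0: "v \<noteq> 0" and lcv: "lc v"
  shows "l = 1"
proof (rule ccontr)
  assume l1: "l \<noteq> 1"
  have "Nrm (Gm *v v) = Nrm v" using lcv Nrm_eq_iff by simp
  then have "(cmod l)\<^sup>2 * Nrm v = Nrm v" using ev Nrm_smult by simp
  then have cl: "(cmod l)\<^sup>2 = 1" using Nrm_pos[OF v0] by simp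
  define m where "m = cnj l"
  have ml: "m * l = 1" unfolding m_def cnj_mult_self cl by simp
  have m1: "m \<noteq> 1" using l1 unfolding m_def by (metis complex_cnj_cnj complex_cnj_one)
  define z where "z = zf v"
  define r where "r = bt z"
  define u1 where "u1 = tp v"
  define u2 where "u2 = bt v"
  define Pai where "Pai = matrix_inv Pa"
  define Pbi where "Pbi = matrix_inv Pb"
  have tz: "tp z = 0" and Cr0: "(C + cadj C) *v r = 0" using lcv by (simp_all add: lc_def z_def r_def)
  have nr: "r \<in> nullsp (C + cadj C)" using Cr0 by (simp add: nullsp_def)
  then have "C *v r = 0" using null_incl by (auto simp: nullsp_def)
  then have CPr: "CP *v r = - (CS *v r)" using C_split
    by (simp add: matrix_vector_mult_add_rdistrib eq_neg_iff_add_eq_0)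
  have Ez1: "(Sg + Pm) *v z = (Sg - Sm) *v v" unfolding z_def by (rule E1)
  have Ez2: "(Sg + Sm) *v (l *s v) = (Sg - Pm) *v z" unfolding z_def using E2[of v] ev by simp
  have r0: "r \<noteq> 0"
  proof
    assume "r = 0"
    then have "z = 0" using tz vec_split_eq[of z 0] by (simp add: r_def)
    then have "(Sg - Sm) *v v = 0" using Ez1 by simp
    then show False using v0 inj_matrix_vector_mult[OF inv_SmS]
      by (metis injD matrix_vector_mult_0_right)
  qed
  have t1: "tp ((Sg + Pm) *v z) = cadj BP *v r"
    by (simp add: Sg_def Pm_def matrix_vector_mult_add_rdistrib top_block tz r_def)
  have t2: "tp ((Sg - Sm) *v v) = Pa *v u1 - (AS *v u1 + cadj BS *v u2)"
    by (simp add: Sg_def Sm_def matrix_vector_mult_diff_rdistrib top_block u1_def u2_def)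
  have t3: "tp ((Sg + Sm) *v (l *s v)) = l *s (Pa *v u1) + (l *s (AS *v u1) + l *s (cadj BS *v u2))"
    by (simp add: Sg_def Sm_def matrix_vector_mult_add_rdistrib top_block u1_def u2_def mv_smult)
  have t4: "tp ((Sg - Pm) *v z) = - (cadj BP *v r)"
    by (simp add: Sg_def Pm_def matrix_vector_mult_diff_rdistrib top_block tz r_def)
  have b1: "bt ((Sg + Pm) *v z) = Pb *v r + CP *v r"
    by (simp add: Sg_def Pm_def matrix_vector_mult_add_rdistrib bot_block tz r_def)
  have b2: "bt ((Sg - Sm) *v v) = Pb *v u2 - (- (BS *v u1) + CS *v u2)"
    by (simp add: Sg_def Sm_def matrix_vector_mult_diff_rdistrib bot_block u1_def u2_def mv_uminus_left)
  have b3: "bt ((Sg + Sm) *v (l *s v)) = l *s (Pb *v u2) + (- (l *s (BS *v u1)) + l *s (CS *v u2))"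
    by (simp add: Sg_def Sm_def matrix_vector_mult_add_rdistrib bot_block u1_def u2_def mv_smult mv_uminus_left)
  have b4: "bt ((Sg - Pm) *v z) = Pb *v r - CP *v r"
    by (simp add: Sg_def Pm_def matrix_vector_mult_diff_rdistrib bot_block tz r_def)
  have e1a: "cadj BP *v r = Pa *v u1 - (AS *v u1 + cadj BS *v u2)"
    using arg_cong[OF Ez1, of tp] t1 t2 by simp
  have e2a: "l *s (Pa *v u1) + (l *s (AS *v u1) + l *s (cadj BS *v u2)) = - (cadj BP *v r)"
    using arg_cong[OF Ez2, of tp] t3 t4 by simp
  have e1b: "Pb *v r + CP *v r = Pb *v u2 - (- (BS *v u1) + CS *v u2)"
    using arg_cong[OF Ez1, of bt] b1 b2 by simp
  have e2b: "l *s (Pb *v u2) + (- (l *s (BS *v u1)) + l *s (CS *v u2)) = Pb *v r - CP *v r"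
    using arg_cong[OF Ez2, of bt] b3 b4 by simp
  have g1: "2 *s (Pa *v u1) = (1 - m) *s (cadj BP *v r)"
    unfolding vec_eq_iff
  proof
    fix i
    have h1: "(cadj BP *v r) $ i = (Pa *v u1) $ i - ((AS *v u1) $ i + (cadj BS *v u2) $ i)"
      by (simp add: e1a)
    have h2: "l * (Pa *v u1) $ i + (l * (AS *v u1) $ i + l * (cadj BS *v u2) $ i) = - (cadj BP *v r) $ i"
      using arg_cong[OF e2a, of "\<lambda>x. x $ i"] by simp
    show "(2 *s (Pa *v u1)) $ i = ((1 - m) *s (cadj BP *v r)) $ i"
      using h1 h2 ml by simp algebra
  qed
  have g2: "2 *s (Pb *v u2) = (1 + m) *s (Pb *v r) + (m - 1) *s (CS *v r)"
    unfolding vec_eq_iff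
  proof
    fix i
    have h1: "(Pb *v r) $ i + (CP *v r) $ i = (Pb *v u2) $ i - (- (BS *v u1) $ i + (CS *v u2) $ i)"
      using arg_cong[OF e1b, of "\<lambda>x. x $ i"] by simp
    have h2: "l * (Pb *v u2) $ i + (- (l * (BS *v u1) $ i) + l * (CS *v u2) $ i) = (Pb *v r) $ i - (CP *v r) $ i"
      using arg_cong[OF e2b, of "\<lambda>x. x $ i"] by simp
    have h3: "(CP *v r) $ i = - (CS *v r) $ i" by (simp add: CPr)
    show "(2 *s (Pb *v u2)) $ i = ((1 + m) *s (Pb *v r) + (m - 1) *s (CS *v r)) $ i"
      using h1 h2 h3 ml by simp algebra
  qed
  have g3: "2 *s (BS *v u1) - 2 *s (CS *v u2) = (1 - m) *s (Pb *v r) - (1 + m) *s (CS *v r)"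
    unfolding vec_eq_iff
  proof
    fix i
    have h1: "(Pb *v r) $ i + (CP *v r) $ i = (Pb *v u2) $ i - (- (BS *v u1) $ i + (CS *v u2) $ i)"
      using arg_cong[OF e1b, of "\<lambda>x. x $ i"] by simp
    have h2: "l * (Pb *v u2) $ i + (- (l * (BS *v u1) $ i) + l * (CS *v u2) $ i) = (Pb *v r) $ i - (CP *v r) $ i"
      using arg_cong[OF e2b, of "\<lambda>x. x $ i"] by simp
    have h3: "(CP *v r) $ i = - (CS *v r) $ i" by (simp add: CPr)
    show "(2 *s (BS *v u1) - 2 *s (CS *v u2)) $ i = ((1 - m) *s (Pb *v r) - (1 + m) *s (CS *v r)) $ i"
      using h1 h2 h3 ml by simp algebra
  qed
  have invPa: "invertible Pa" using hpd_inv[OF Pa_hpd] .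
  have invPb: "invertible Pb" using hpd_inv[OF Pb_hpd] .
  define X where "X = BS *v (Pai *v (cadj BP *v r))"
  define Y where "Y = CS *v (Pbi *v (CS *v r))"
  have s1: "2 *s (BS *v u1) = (1 - m) *s X"
  proof -
    have "2 *s u1 = Pai *v (2 *s (Pa *v u1))"
      by (simp add: mv_smult Pai_def minv_mv[OF invPa])
    also have "\<dots> = (1 - m) *s (Pai *v (cadj BP *v r))" by (simp only: g1 mv_smult)
    finally have "2 *s u1 = (1 - m) *s (Pai *v (cadj BP *v r))" .
    then show ?thesis by (metis X_def mv_smult)
  qed
  have s2: "2 *s (CS *v u2) = (1 + m) *s (CS *v r) + (m - 1) *s Y"
  proof -
    have "2 *s u2 = Pbi *v (2 *s (Pb *v u2))"
      by (simp add: mv_smult Pbi_def minv_mv[OF invPb])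
    also have "\<dots> = (1 + m) *s r + (m - 1) *s (Pbi *v (CS *v r))"
      by (simp add: g2 mv_smult matrix_vector_right_distrib matrix_vector_mult_diff_distrib Pbi_def minv_mv[OF invPb])
    finally have "2 *s u2 = (1 + m) *s r + (m - 1) *s (Pbi *v (CS *v r))" .
    then show ?thesis by (metis Y_def mv_smult matrix_vector_right_distrib)
  qed
  have V: "(1 - m) *s X - ((1 + m) *s (CS *v r) + (m - 1) *s Y) = (1 - m) *s (Pb *v r) - (1 + m) *s (CS *v r)"
    using g3 s1 s2 by simp
  have XY: "X = Pb *v r - Y"
    unfolding vec_eq_iff
  proof
    fix i
    have h: "(1 - m) * X $ i - ((1 + m) * (CS *v r) $ i + (m - 1) * Y $ i) = (1 - m) * (Pb *v r) $ i - (1 + m) * (CS *v r) $ i"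
      using arg_cong[OF V, of "\<lambda>x. x $ i"]
      by (simp only: vector_minus_component vector_add_component vector_smult_component)
    have "(1 - m) * (X $ i - ((Pb *v r) $ i - Y $ i)) = 0" using h by algebra
    then show "X $ i = (Pb *v r - Y) $ i" using m1 by simp
  qed
  have cCS: "cadj CS = - CS" using CS_skew by (simp add: skew_hermitian_def)
  have q1: "(BS ** Pai ** cadj BP) *v r = X"
    by (simp add: X_def matrix_vector_mul_assoc[symmetric])
  have q2: "(Pb + CS ** Pbi ** cadj CS) *v r = Pb *v r - Y"
    by (simp add: Y_def matrix_vector_mul_assoc[symmetric] matrix_vector_mult_add_rdistrib cCS mv_uminus_left mv_uminus)
  have qeq: "qform (Pb + CS ** matrix_inv Pb ** cadj CS) r = qform (BS ** matrix_inv Pa ** cadj BP) r"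
    using q1 q2 XY by (simp add: qform_ip Pai_def Pbi_def)
  have Pbi_hpd: "hpd Pbi" unfolding Pbi_def by (rule hpd_minv[OF Pb_hpd])
  have "qform (Pb + CS ** matrix_inv Pb ** cadj CS) r = qform Pb r + qform Pbi (cadj CS *v r)"
  proof -
    have "ip r (CS *v (Pbi *v (cadj CS *v r))) = ip (cadj CS *v r) (Pbi *v (cadj CS *v r))"
      using ip_adj[of "cadj CS" r "Pbi *v (cadj CS *v r)"] by simp
    then show ?thesis
      by (simp add: qform_ip matrix_vector_mult_add_rdistrib ip_add_right Pbi_def matrix_vector_mul_assoc[symmetric])
  qed
  moreover have "Re (qform Pb r) > 0" using Pb_hpd r0 by (simp add: hpd_def)
  moreover have "Re (qform Pbi (cadj CS *v r)) \<ge> 0"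
    using Pbi_hpd by (cases "cadj CS *v r = 0") (auto simp: hpd_def less_imp_le)
  ultimately have pos: "Re (qform (BS ** matrix_inv Pa ** cadj BP) r) > 0"
    using qeq by simp
  have z3: "qform (BS ** matrix_inv Pa ** cadj BP) r = 0" if "r \<in> nullsp (cadj BS) \<union> nullsp (cadj BP)"
  proof -
    have "ip r (BS *v w) = ip (cadj BS *v r) w" for w
      using ip_adj[of "cadj BS" r w] by simp
    then show ?thesis using that
      by (auto simp: qform_ip nullsp_def matrix_vector_mul_assoc[symmetric])
  qed
  from conds show False
  proof (elim disjE)
    assume "\<forall>r\<in>nullsp (C + cadj C). r \<noteq> 0 \<longrightarrow>
          qform (Pb + CS ** matrix_inv Pb ** cadj CS) r \<noteq> qform (BS ** matrix_inv Pa ** cadj BP) r"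
    then show False using nr r0 qeq by blast
  next
    assume "\<forall>r\<in>nullsp (C + cadj C). r \<noteq> 0 \<longrightarrow>
          Im (qform (BS ** matrix_inv Pa ** cadj BP) r) = 0 \<and> Re (qform (BS ** matrix_inv Pa ** cadj BP) r) \<le> 0"
    then show False using nr r0 pos by force
  next
    assume "nullsp (C + cadj C) \<subseteq> nullsp (cadj BS) \<union> nullsp (cadj BP)"
    then show False using nr z3 pos by force
  next
    assume "pos_def C"
    then have "Re (qform (C + cadj C) r) > 0" using r0 by (simp add: pos_def_def hpd_def)
    then show False using Cr0 by (simp add: qform_ip)
  next
    assume "BS = 0"
    then have "r \<in> nullsp (cadj BS) \<union> nullsp (cadj BP)" by (simp add: nullsp_def)
    then show False using z3 pos by force
  next
    assume "BP = 0"
    then have "r \<in> nullsp (cadj BS) \<union> nullsp (cadj BP)" by (simp add: nullsp_def)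
    then show False using z3 pos by force
  qed
qed

end


lemma tendsto_mv: "(f \<longlongrightarrow> l) F \<Longrightarrow> ((\<lambda>k. (M::complex^'n^'m) *v f k) \<longlongrightarrow> M *v l) F"
proof -
  have "bounded_linear (\<lambda>x. M *v x)"
    using matrix_vector_mul_linear linear_conv_bounded_linear by blast
  then show "(f \<longlongrightarrow> l) F \<Longrightarrow> ((\<lambda>k. M *v f k) \<longlongrightarrow> M *v l) F"
    by (rule bounded_linear.tendsto)
qed

lemma tendsto_ip: "(f \<longlongrightarrow> a) F \<Longrightarrow> (g \<longlongrightarrow> b) F \<Longrightarrow> ((\<lambda>k. ip (f k) (g k)) \<longlongrightarrow> ip a b) F"
  unfolding ip_def
  by (intro tendsto_sum tendsto_mult tendsto_cnj tendsto_vec_nth)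

lemma mpow_add: "mpow M i (mpow M k v) = mpow M (i + k) v"
  by (simp add: mpow_def funpow_add)

lemma mpow_Suc': "mpow M (Suc j) v = mpow M j (M *v v)"
  by (simp only: mpow_def funpow_Suc_right comp_def)

lemma mpow_lin: "mpow M i (v + w) = mpow M i v + mpow M i w" "mpow M i (c *s v) = c *s mpow M i v"
  "mpow M i 0 = 0" "mpow M i (v - w) = mpow M i v - mpow M i w"
  by (induction i) (auto simp: mpow_Suc matrix_vector_right_distrib mv_smult matrix_vector_mult_diff_distrib)

lemma tendsto_mpow: "(f \<longlongrightarrow> l) F \<Longrightarrow> ((\<lambda>k. mpow M i (f k)) \<longlongrightarrow> mpow M i l) F"
  by (induction i) (auto simp: mpow_Suc intro: tendsto_mv)

context epss
begin

lemma tendsto_Nrm: "(f \<longlongrightarrow> l) F \<Longrightarrow> ((\<lambda>k. Nrm (f k)) \<longlongrightarrow> Nrm l) F"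
  unfolding Nrm_def Gq_def
  by (intro tendsto_Re tendsto_ip tendsto_mv)

lemma Nrm_scaleR: "Nrm (t *\<^sub>R v) = t\<^sup>2 * Nrm v"
  using Nrm_smult[of "complex_of_real t" v] by (simp add: smult_of_real)

lemma Nrm_lower: "\<exists>\<kappa>>0. \<forall>v. \<kappa> * (norm v)\<^sup>2 \<le> Nrm v"
proof -
  let ?S = "sphere (0::complex^('n+'m)) 1"
  have "continuous_on ?S Nrm"
    unfolding continuous_on_def by (intro ballI tendsto_Nrm tendsto_ident_at)
  moreover have "?S \<noteq> {}" by (simp add: sphere_eq_empty)
  ultimately obtain x0 where x0: "x0 \<in> ?S" "\<forall>y\<in>?S. Nrm x0 \<le> Nrm y"
    using continuous_attains_inf[OF compact_sphere] by blast
  have "x0 \<noteq> 0" using x0(1) by auto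
  then have kpos: "Nrm x0 > 0" by (rule Nrm_pos)
  have "Nrm x0 * (norm v)\<^sup>2 \<le> Nrm v" for v
  proof (cases "v = 0")
    case True then show ?thesis by simp
  next
    case False
    define w where "w = (1 / norm v) *\<^sub>R v"
    have "w \<in> ?S" using False by (simp add: w_def)
    then have "Nrm x0 \<le> Nrm w" using x0(2) by blast
    moreover have "v = norm v *\<^sub>R w" using False by (simp add: w_def)
    then have "Nrm v = (norm v)\<^sup>2 * Nrm w" by (metis Nrm_scaleR)
    ultimately show ?thesis
      by (simp add: mult.commute mult_left_mono)
  qed
  then show ?thesis using kpos by blast
qed

lemma fix_null:
  assumes fy: "Gm *v y = y"
  shows "(Pm + Sm) *v y = 0"
proof -
  define z where "z = zf y"
  have e1: "(Sg + Pm) *v z = (Sg - Sm) *v y" unfolding z_def by (rule E1)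
  have e2: "(Sg + Sm) *v y = (Sg - Pm) *v z" unfolding z_def using E2[of y] fy by simp
  have c: "(Sg *v z) $ i = (Sg *v y) $ i \<and> (Pm *v z) $ i = - (Sm *v y) $ i" for i
  proof -
    have h1: "(Sg *v z) $ i + (Pm *v z) $ i = (Sg *v y) $ i - (Sm *v y) $ i"
      using arg_cong[OF e1, of "\<lambda>x. x $ i"]
      by (simp only: matrix_vector_mult_add_rdistrib matrix_vector_mult_diff_rdistrib vector_add_component vector_minus_component)
    have h2: "(Sg *v y) $ i + (Sm *v y) $ i = (Sg *v z) $ i - (Pm *v z) $ i"
      using arg_cong[OF e2, of "\<lambda>x. x $ i"]
      by (simp only: matrix_vector_mult_add_rdistrib matrix_vector_mult_diff_rdistrib vector_add_component vector_minus_component)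
    have "(Pm *v z) $ i = - (Sm *v y) $ i" using h1 h2 by algebra
    moreover have "(Sg *v z) $ i = (Sg *v y) $ i" using h1 h2 by algebra
    ultimately show ?thesis by simp
  qed
  then have "Sg *v z = Sg *v y" by (simp add: vec_eq_iff)
  then have "z = y" using inj_matrix_vector_mult[OF Sg_inv] by (meson injD)
  moreover have "Pm *v z = - (Sm *v y)" using c by (simp add: vec_eq_iff)
  ultimately show ?thesis by (simp add: matrix_vector_mult_add_rdistrib)
qed

lemma fix_point:
  assumes sol: "(Pm + Sm) *v u = b"
  shows "Gm *v u + 2 *s ((matrix_inv (Sg + Sm) ** Sg ** matrix_inv (Sg + Pm)) *v b) = u"
proof -
  define w where "w = zf u"
  define w' where "w' = matrix_inv (Sg + Pm) *v b"
  have e1: "(Sg + Pm) *v w = (Sg - Sm) *v u" unfolding w_def by (rule E1)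
  have e1': "(Sg + Pm) *v w' = b" unfolding w'_def by (simp add: minv_mv[OF inv_SP])
  have "(Sg + Pm) *v (w + w') = (Sg + Pm) *v w + (Sg + Pm) *v w'"
    by (simp only: matrix_vector_right_distrib)
  also have "\<dots> = (Sg - Sm) *v u + (Pm + Sm) *v u" using e1 e1' sol by simp
  also have "\<dots> = (Sg + Pm) *v u"
    by (simp add: matrix_vector_mult_add_rdistrib matrix_vector_mult_diff_rdistrib algebra_simps)
  finally have "(Sg + Pm) *v (w + w') = (Sg + Pm) *v u" .
  then have ww: "w' = u - w" using inj_matrix_vector_mult[OF inv_SP] by (metis add_diff_cancel_left' injD)
  have "(Sg + Sm) *v (Gm *v u + 2 *s ((matrix_inv (Sg + Sm) ** Sg ** matrix_inv (Sg + Pm)) *v b))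
      = (Sg - Pm) *v w + 2 *s (Sg *v w')"
    by (simp add: matrix_vector_right_distrib E2 w_def mv_smult matrix_vector_mul_assoc[symmetric]
        minv_mv[OF inv_SS] w'_def)
  also have "\<dots> = (Sg + Sm) *v u"
  proof -
    have "((Sg - Pm) *v w + 2 *s (Sg *v w')) $ i = ((Sg + Sm) *v u) $ i" for i
    proof -
      have h1: "(Sg *v w) $ i + (Pm *v w) $ i = (Sg *v u) $ i - (Sm *v u) $ i"
        using arg_cong[OF e1, of "\<lambda>x. x $ i"]
        by (simp only: matrix_vector_mult_add_rdistrib matrix_vector_mult_diff_rdistrib vector_add_component vector_minus_component)
      have h2: "(Sg *v w') $ i = (Sg *v u) $ i - (Sg *v w) $ i"
        by (simp add: ww matrix_vector_mult_diff_distrib)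
      show ?thesis using h1 h2
        by (simp add: matrix_vector_mult_add_rdistrib matrix_vector_mult_diff_rdistrib) algebra
    qed
    then show ?thesis by (simp add: vec_eq_iff)
  qed
  finally show ?thesis using inj_matrix_vector_mult[OF inv_SS] by (meson injD)
qed

definition "VV = {v. \<forall>i. lc (mpow Gm i v)}"

lemma VV_csub: "csub VV"
  unfolding csub_def VV_def
  by (auto simp: mpow_lin lc_zero lc_add lc_smult)

lemma VV_inv: "v \<in> VV \<Longrightarrow> Gm *v v \<in> VV"
  unfolding VV_def by (auto simp: mpow_Suc'[symmetric])

lemma Nrm_mpow_le: "Nrm (mpow Gm k v) \<le> Nrm v"
proof (induction k)
  case (Suc k) then show ?case using Nrm_le[of "mpow Gm k v"] by (simp add: mpow_Suc)
qed simp

lemma VV_fix: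
  assumes yV: "y \<in> VV"
  shows "Gm *v y = y"
proof (rule ccontr)
  assume ne: "Gm *v y \<noteq> y"
  define W where "W = (\<lambda>w. Gm *v w - w) ` VV"
  have cV: "csub VV" by (rule VV_csub)
  have V0: "0 \<in> VV" and Vadd: "\<And>a b. a \<in> VV \<Longrightarrow> b \<in> VV \<Longrightarrow> a + b \<in> VV"
    and Vsm: "\<And>c a. a \<in> VV \<Longrightarrow> c *s a \<in> VV"
    using cV unfolding csub_def by blast+
  have cW: "csub W"
    unfolding csub_def
  proof (intro conjI ballI allI)
    show "0 \<in> W" unfolding W_def by (rule image_eqI[of _ _ 0]) (simp_all add: V0)
  next
    fix x y assume "x \<in> W" "y \<in> W"
    then obtain a b where ab: "a \<in> VV" "b \<in> VV" "x = Gm *v a - a" "y = Gm *v b - b"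
      unfolding W_def by blast
    have "x + y = Gm *v (a + b) - (a + b)" using ab(3,4) by (simp add: matrix_vector_right_distrib)
    then show "x + y \<in> W" unfolding W_def by (rule image_eqI) (rule Vadd[OF ab(1,2)])
  next
    fix c x assume "x \<in> W"
    then obtain a where a: "a \<in> VV" "x = Gm *v a - a" unfolding W_def by blast
    have "c *s x = Gm *v (c *s a) - c *s a" using a(2) by (simp add: mv_smult vector_ssub_ldistrib)
    then show "c *s x \<in> W" unfolding W_def by (rule image_eqI) (rule Vsm[OF a(1)])
  qed
  have iW: "\<forall>x\<in>W. Gm *v x \<in> W"
  proof
    fix x assume "x \<in> W"
    then obtain a where a: "a \<in> VV" "x = Gm *v a - a" unfolding W_def by blast
    have "Gm *v x = Gm *v (Gm *v a) - Gm *v a" using a(2) by (simp add: matrix_vector_mult_diff_distrib)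
    then show "Gm *v x \<in> W" unfolding W_def by (rule image_eqI) (rule VV_inv[OF a(1)])
  qed
  have yW: "Gm *v y - y \<in> W" unfolding W_def using yV by blast
  have y0: "Gm *v y - y \<noteq> 0" using ne by simp
  obtain x l where x: "x \<in> W" "x \<noteq> 0" "Gm *v x = l *s x"
    using eig_exists[OF cW iW yW y0] by blast
  then obtain w where w: "w \<in> VV" "x = Gm *v w - w" unfolding W_def by blast
  have "Gm *v w + (-1) *s w \<in> VV" using Vadd[OF VV_inv[OF w(1)] Vsm[OF w(1)]] .
  moreover have "Gm *v w + (-1) *s w = x" using w(2) by (simp add: vector_sneg_minus1[symmetric])
  ultimately have "x \<in> VV" by simp
  then have "lc (mpow Gm 0 x)" unfolding VV_def by blast
  then have "lc x" by simp
  then have l1: "l = 1" using eig_one x(2,3) by blast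
  then have gx: "Gm *v x = x" using x(3) by simp
  have gw: "Gm *v w = w + x" using w(2) by simp
  have pw: "mpow Gm k w = w + of_nat k *s x" for k
  proof (induction k)
    case 0 then show ?case by simp
  next
    case (Suc k)
    have "mpow Gm (Suc k) w = Gm *v w + of_nat k *s (Gm *v x)"
      by (simp add: mpow_Suc Suc matrix_vector_right_distrib mv_smult)
    also have "\<dots> = w + x + of_nat k *s x" by (simp only: gw gx)
    also have "\<dots> = w + of_nat (Suc k) *s x"
      by (simp add: vector_sadd_rdistrib algebra_simps)
    finally show ?case .
  qed
  obtain \<kappa> where k: "\<kappa> > 0" "\<forall>v. \<kappa> * (norm v)\<^sup>2 \<le> Nrm v" using Nrm_lower by blast
  define R where "R = norm w + sqrt (Nrm w / \<kappa>)"
  have nx: "norm x > 0" using x(2) by simp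
  obtain k :: nat where kk: "R < real k * norm x"
    using reals_Archimedean3[OF nx] by blast
  have nk: "norm (of_nat k *s x) = real k * norm x"
    using smult_of_real[of "real k" x] by simp
  have tri: "norm (of_nat k *s x) \<le> norm (w + of_nat k *s x) + norm w"
    using norm_triangle_ineq4[of "w + of_nat k *s x" w] by simp
  have big: "sqrt (Nrm w / \<kappa>) < norm (w + of_nat k *s x)"
    using kk tri nk unfolding R_def by linarith
  have "Nrm (w + of_nat k *s x) \<le> Nrm w"
    using Nrm_mpow_le[of k w] unfolding pw .
  then have "\<kappa> * (norm (w + of_nat k *s x))\<^sup>2 \<le> Nrm w"
    using k(2)[rule_format, of "w + of_nat k *s x"] by linarith
  then have "(norm (w + of_nat k *s x))\<^sup>2 \<le> Nrm w / \<kappa>" using k(1) by (simp add: field_simps)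
  then have "norm (w + of_nat k *s x) \<le> sqrt (Nrm w / \<kappa>)" by (rule real_le_rsqrt)
  then show False using big by simp
qed

end


context epss
begin

lemma conv: "\<exists>y. Gm *v y = y \<and> (\<lambda>k. mpow Gm k e) \<longlonglongrightarrow> y"
proof -
  define E where "E k = mpow Gm k e" for k
  obtain \<kappa> where k: "\<kappa> > 0" "\<And>v. \<kappa> * (norm v)\<^sup>2 \<le> Nrm v" using Nrm_lower by blast
  have ES: "E (Suc k) = Gm *v E k" for k by (simp add: E_def mpow_Suc)
  have dec: "decseq (\<lambda>k. Nrm (E k))"
    by (rule decseq_SucI) (simp add: ES Nrm_le)
  define R where "R = sqrt (Nrm e / \<kappa>)"
  have "E k \<in> cball 0 R" for k
  proof -
    have "\<kappa> * (norm (E k))\<^sup>2 \<le> Nrm e" using k(2)[of "E k"] Nrm_mpow_le[of k e] by (simp add: E_def)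
    then have "(norm (E k))\<^sup>2 \<le> Nrm e / \<kappa>" using k(1) by (simp add: field_simps)
    then have "norm (E k) \<le> R" unfolding R_def by (rule real_le_rsqrt)
    then show ?thesis by simp
  qed
  then obtain y r where r: "strict_mono r" "(E \<circ> r) \<longlonglongrightarrow> y"
    using compact_cball[of 0 R] unfolding compact_def by blast
  have Er: "(\<lambda>j. E (r j)) \<longlonglongrightarrow> y" using r(2) by (simp add: comp_def)
  obtain L where L: "(\<lambda>k. Nrm (E k)) \<longlonglongrightarrow> L"
    using decseq_convergent[OF dec, of 0] Nrm_nonneg by blast
  have NL: "Nrm (mpow Gm i y) = L" for i
  proof -
    have t1: "(\<lambda>j. Nrm (mpow Gm i (E (r j)))) \<longlonglongrightarrow> Nrm (mpow Gm i y)"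
      by (intro tendsto_Nrm tendsto_mpow Er)
    have sm: "strict_mono (\<lambda>j. i + r j)" using r(1) by (simp add: strict_mono_def)
    have "((\<lambda>k. Nrm (E k)) \<circ> (\<lambda>j. i + r j)) \<longlonglongrightarrow> L" by (rule LIMSEQ_subseq_LIMSEQ[OF L sm])
    then have t2: "(\<lambda>j. Nrm (mpow Gm i (E (r j)))) \<longlonglongrightarrow> L"
      by (simp add: comp_def E_def mpow_add)
    show ?thesis using LIMSEQ_unique[OF t1 t2] .
  qed
  have "lc (mpow Gm i y)" for i
  proof -
    have "Nrm (Gm *v mpow Gm i y) = Nrm (mpow Gm i y)"
      using NL[of "Suc i"] NL[of i] by (simp add: mpow_Suc)
    then show ?thesis using Nrm_eq_iff by blast
  qed
  then have "y \<in> VV" by (simp add: VV_def)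
  then have fy: "Gm *v y = y" by (rule VV_fix)
  define D where "D k = E k - y" for k
  have DS: "D (Suc k) = Gm *v D k" for k
    using fy by (simp add: D_def ES matrix_vector_mult_diff_distrib)
  have decD: "decseq (\<lambda>k. Nrm (D k))"
    by (rule decseq_SucI) (simp add: DS Nrm_le)
  obtain L' where L': "(\<lambda>k. Nrm (D k)) \<longlonglongrightarrow> L'"
    using decseq_convergent[OF decD, of 0] Nrm_nonneg by blast
  have "(\<lambda>j. Nrm (D (r j))) \<longlonglongrightarrow> Nrm 0"
    unfolding D_def by (intro tendsto_Nrm) (use tendsto_diff[OF Er tendsto_const[of y]] in simp)
  moreover have "(\<lambda>j. Nrm (D (r j))) \<longlonglongrightarrow> L'"
    using LIMSEQ_subseq_LIMSEQ[OF L' r(1)] by (simp add: comp_def)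
  ultimately have "L' = 0" using LIMSEQ_unique by fastforce
  with L' have N0: "(\<lambda>k. Nrm (D k)) \<longlonglongrightarrow> 0" by simp
  have "(\<lambda>k. sqrt (Nrm (D k) / \<kappa>)) \<longlonglongrightarrow> sqrt (0 / \<kappa>)"
    by (intro tendsto_real_sqrt tendsto_divide N0 tendsto_const) (use k(1) in simp)
  then have g0: "(\<lambda>k. sqrt (Nrm (D k) / \<kappa>)) \<longlonglongrightarrow> 0" by simp
  have "norm (D k) \<le> sqrt (Nrm (D k) / \<kappa>)" for k
  proof -
    have "(norm (D k))\<^sup>2 \<le> Nrm (D k) / \<kappa>" using k(2)[of "D k"] k(1) by (simp add: field_simps)
    then show ?thesis by (rule real_le_rsqrt)
  qed
  then have "D \<longlonglongrightarrow> 0" by (intro Lim_null_comparison[OF _ g0]) simp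
  then have "(\<lambda>k. D k + y) \<longlonglongrightarrow> 0 + y" by (intro tendsto_add tendsto_const)
  then have "E \<longlonglongrightarrow> y" by (simp add: D_def)
  then show ?thesis using fy unfolding E_def by blast
qed

end

theorem corollary1:
  fixes A AP AS Pa :: "complex^'n^'n"
    and C CP CS Pb :: "complex^'m^'m"
    and B BP BS :: "complex^'n^'m"
    and b :: "complex^('n + 'm)"
  assumes mn: "CARD('m) \<le> CARD('n)"
    and A_pd: "pos_def A" and C_psd: "pos_semidef C"
    and sing: "\<not> invertible (block A (cadj B) (- B) C)"
    and consistent: "\<exists>u. block A (cadj B) (- B) C *v u = b"
    and A_split: "A = AP + AS" and AP_pd: "pos_def AP" and AS_skew: "skew_hermitian AS"
    and C_split: "C = CP + CS" and CP_psd: "pos_semidef CP" and CS_skew: "skew_hermitian CS"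
    and B_split: "B = BP + BS"
    and Pa_hpd: "hpd Pa" and Pb_hpd: "hpd Pb"
    and null_incl: "nullsp (C + cadj C) \<subseteq> nullsp C"
    and conds:
      "(\<forall>r\<in>nullsp (C + cadj C). r \<noteq> 0 \<longrightarrow>
          qform (Pb + CS ** matrix_inv Pb ** cadj CS) r \<noteq> qform (BS ** matrix_inv Pa ** cadj BP) r)
     \<or> (\<forall>r\<in>nullsp (C + cadj C). r \<noteq> 0 \<longrightarrow>
          Im (qform (BS ** matrix_inv Pa ** cadj BP) r) = 0 \<and> Re (qform (BS ** matrix_inv Pa ** cadj BP) r) \<le> 0)
     \<or> nullsp (C + cadj C) \<subseteq> nullsp (cadj BS) \<union> nullsp (cadj BP)
     \<or> (pos_def C \<or> BS = 0 \<or> BP = 0)"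
  shows "let \<P> = block AP (cadj BP) (- BP) CP;
             \<S> = block AS (cadj BS) (- BS) CS;
             \<Sigma> = block Pa 0 0 Pb;
             \<Gamma> = matrix_inv (\<Sigma> + \<S>) ** (\<Sigma> - \<P>) ** matrix_inv (\<Sigma> + \<P>) ** (\<Sigma> - \<S>);
             c = (2::complex) *s (matrix_inv (\<Sigma> + \<S>) ** \<Sigma> ** matrix_inv (\<Sigma> + \<P>) *v b)
         in semi_convergent \<Gamma> c (block A (cadj B) (- B) C) b"
proof -
  interpret e: epss AP AS Pa C CP CS Pb BP BS
    by (unfold_locales) (fact AP_pd AS_skew C_split C_psd CS_skew Pa_hpd Pb_hpd null_incl conds)+
  have Mat: "block A (cadj B) (- B) C = e.Pm + e.Sm"
    by (simp add: e.Pm_def e.Sm_def block_add A_split B_split C_split cadj_add)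
  define c where "c = (2::complex) *s (matrix_inv (e.Sg + e.Sm) ** e.Sg ** matrix_inv (e.Sg + e.Pm) *v b)"
  have "semi_convergent e.Gm c (e.Pm + e.Sm) b"
    unfolding semi_convergent_def
  proof
    fix u0
    obtain us where us: "(e.Pm + e.Sm) *v us = b" using consistent Mat by auto
    have fp: "e.Gm *v us + c = us" unfolding c_def by (rule e.fix_point[OF us])
    have it: "((\<lambda>v. e.Gm *v v + c) ^^ k) u0 = us + mpow e.Gm k (u0 - us)" for k
    proof (induction k)
      case 0 then show ?case by simp
    next
      case (Suc k)
      have "((\<lambda>v. e.Gm *v v + c) ^^ Suc k) u0 = e.Gm *v (us + mpow e.Gm k (u0 - us)) + c"
        using Suc by simp
      also have "\<dots> = (e.Gm *v us + c) + e.Gm *v mpow e.Gm k (u0 - us)"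
        by (simp add: matrix_vector_right_distrib algebra_simps)
      also have "\<dots> = us + mpow e.Gm (Suc k) (u0 - us)" by (simp add: fp mpow_Suc)
      finally show ?case .
    qed
    obtain y where y: "e.Gm *v y = y" "(\<lambda>k. mpow e.Gm k (u0 - us)) \<longlonglongrightarrow> y"
      using e.conv by blast
    have "(e.Pm + e.Sm) *v (us + y) = b"
      using us e.fix_null[OF y(1)] by (simp add: matrix_vector_right_distrib)
    moreover have "(\<lambda>k. ((\<lambda>v. e.Gm *v v + c) ^^ k) u0) \<longlonglongrightarrow> us + y"
      unfolding it by (intro tendsto_add tendsto_const y(2))
    ultimately show "\<exists>u. (e.Pm + e.Sm) *v u = b \<and> (\<lambda>k. ((\<lambda>v. e.Gm *v v + c) ^^ k) u0) \<longlonglongrightarrow> u"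
      by blast
  qed
  then show ?thesis
    unfolding Let_def Mat c_def e.Gm_def e.Pm_def e.Sm_def e.Sg_def .
qed

end
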